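(* Let $M\in\mathbb{R}^{n\times n}$ be symmetric with eigenvalues ordered so that $|\lambda_1|\ge|\lambda_2|\ge\cdots$, where $\lambda=\lambda_1>0$ and $\lambda_1>|\lambda_2|$. Let $u$ be the unit leading eigenvector and $l_2=|\lambda_2|/\lambda$. Let $0<\theta\le\frac1{40}(1-l_2)^{3/2}$, and let $Q\in\mathbb{R}^{n\times n}$ satisfy $\|Q-M\|_2\le\theta\|M\|_2$. Let $\nu\le1/20$, and let $x,x'\in\mathbb{R}^n$ satisfy: - $\|x\|=\|x'\|=1$; - $\langle u,x\rangle\ge0$ and $\langle u,x'\rangle\ge0$; - $\|\mathcal P_{u_\perp}(x)\|\le\nu$ and $\|\mathcal P_{u_\perp}(x')\|\le\nu$. Put $z=\mathcal P_{u_\perp}(x)$ and $z'=\mathcal P_{u_\perp}(x')$. Then $$\Big\|\mathcal P_{u_\perp}\Big(\frac{Qx}{\|Qx\|}-\frac{Qx'}{\|Qx'\|}\Big)\Big\|\le\big(l_2(1+3\nu^2)+3\theta\big)\|z-z'\|$$ and $$\Big\|\mathcal P_{u}\Big(\frac{Qx}{\|Qx\|}-\frac{Qx'}{\|Qx'\|}\Big)\Big\|\le(4\nu+4\theta)\|z-z'\|.$$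
   Context: $\mathcal P_u$ denotes the orthogonal projector onto the span of $u$, and $\mathcal P_{u_\perp}$ the orthogonal projector onto its orthogonal complement. $\|\cdot\|_2$ is the operator norm. *)

theory Defs
  imports "HOL-Analysis.Analysis"
begin

definition proj_u :: "real^'n \<Rightarrow> real^'n \<Rightarrow> real^'n" where
  "proj_u u y = (u \<bullet> y) *\<^sub>R u"

definition proj_uperp :: "real^'n \<Rightarrow> real^'n \<Rightarrow> real^'n" where
  "proj_uperp u y = y - (u \<bullet> y) *\<^sub>R u"

definition opnorm :: "real^'n^'n \<Rightarrow> real" where
  "opnorm A = onorm (\<lambda>x. A *v x)"

end

theory Submission
  imports Defs
begin


lemma sym_dot:
  fixes M :: "real^'n^'n"
  assumes "transpose M = M"
  shows "(M *v w) \<bullet> v = w \<bullet> (M *v v)"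
proof -
  have "(w v* transpose M) \<bullet> v = w \<bullet> (M *v v)"
    using assms dot_lmul_matrix[of w M v] by simp
  then show ?thesis by simp
qed

lemma quad_nonpos_zero:
  fixes b c :: real
  assumes "\<And>t. 2*t*b + t^2*c \<le> 0" and "b \<ge> 0"
  shows "b = 0"
proof (rule ccontr)
  assume "b \<noteq> 0" then have bp: "b > 0" using assms(2) by simp
  define t where "t = b / (\<bar>c\<bar> + 1)"
  have tp: "t > 0" using bp by (simp add: t_def)
  have "2*t*b + t^2*c \<le> 0" by (rule assms(1))
  then have "t*(2*b + t*c) \<le> 0" by (simp add: power2_eq_square algebra_simps)
  then have "2*b + t*c \<le> 0" using tp by (simp add: mult_le_0_iff)
  moreover have "t * \<bar>c\<bar> < b"
  proof -
    have "t * (\<bar>c\<bar> + 1) = b" unfolding t_def by simp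
    then show ?thesis using tp by (simp add: algebra_simps)
  qed
  moreover have "- (t*\<bar>c\<bar>) \<le> t*c" using tp
    using mult_left_mono[of "-\<bar>c\<bar>" c t] by simp
  ultimately show False using bp by linarith
qed

lemma spectral_bound:
  fixes M :: "real^'n^'n" and u :: "real^'n"
  assumes symM: "transpose M = M"
    and u_eig: "M *v u = lam *\<^sub>R u"
    and lam2_eig: "\<exists>v. v \<noteq> 0 \<and> u \<bullet> v = 0 \<and> M *v v = lam2 *\<^sub>R v"
    and lam2_max: "\<And>mu v. v \<noteq> 0 \<Longrightarrow> u \<bullet> v = 0 \<Longrightarrow> M *v v = mu *\<^sub>R v \<Longrightarrow> \<bar>mu\<bar> \<le> \<bar>lam2\<bar>"
  shows "\<And>w. u \<bullet> w = 0 \<Longrightarrow> norm (M *v w) \<le> \<bar>lam2\<bar> * norm w"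
proof -
  have uM: "u \<bullet> (M *v w) = lam * (u \<bullet> w)" for w
    using sym_dot[OF symM, of u w] u_eig by simp
  define S where "S = {w. norm w = 1 \<and> u \<bullet> w = 0}"
  have "compact S"
  proof -
    have "closed S" unfolding S_def
      by (intro closed_Collect_conj closed_Collect_eq continuous_intros)
    moreover have "bounded S" unfolding S_def bounded_iff by auto
    ultimately show ?thesis using compact_eq_bounded_closed by blast
  qed
  moreover have "S \<noteq> {}"
  proof -
    obtain v where v: "v \<noteq> 0" "u \<bullet> v = 0" using lam2_eig by blast
    have "(1/norm v) *\<^sub>R v \<in> S" using v by (simp add: S_def)
    then show ?thesis by blast
  qed
  moreover have "continuous_on S (\<lambda>w. norm (M *v w))"
    by (rule continuous_on_norm[OF linear_continuous_on[OF matrix_vector_mul_bounded_linear]])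
  ultimately have "\<exists>x\<in>S. \<forall>y\<in>S. norm (M *v y) \<le> norm (M *v x)"
    by (rule continuous_attains_sup)
  then obtain w0 where w0: "w0 \<in> S" and w0max: "\<And>y. y \<in> S \<Longrightarrow> norm (M *v y) \<le> norm (M *v w0)"
    by blast
  define s where "s = norm (M *v w0)"
  have w0n: "norm w0 = 1" and w0u: "u \<bullet> w0 = 0" using w0 by (auto simp: S_def)
  have bnd: "norm (M *v z) \<le> s * norm z" if "u \<bullet> z = 0" for z
  proof (cases "z = 0")
    case True then show ?thesis by simp
  next
    case False
    have "(1/norm z) *\<^sub>R z \<in> S" using False that by (simp add: S_def)
    then have "norm (M *v ((1/norm z) *\<^sub>R z)) \<le> s" using w0max s_def by blast
    then have "(1/norm z) * norm (M *v z) \<le> s"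
      by (simp add: matrix_vector_mult_scaleR)
    then show ?thesis using False by (simp add: field_simps)
  qed
  have s0: "s \<ge> 0" by (simp add: s_def)
  define B where "B = M *v (M *v w0) - (s^2) *\<^sub>R w0"
  have uB: "u \<bullet> B = 0" unfolding B_def using w0u by (simp add: uM inner_diff_right)
  have "2*t*(B \<bullet> B) + t^2*((M *v B) \<bullet> (M *v B) - s^2 * (B \<bullet> B)) \<le> 0" for t
  proof -
    have "u \<bullet> (w0 + t *\<^sub>R B) = 0" using uB w0u by (simp add: inner_add_right)
    then have "norm (M *v (w0 + t *\<^sub>R B)) ^2 \<le> (s * norm (w0 + t *\<^sub>R B))^2"
      using bnd by (simp add: power_mono)
    then have "(M *v (w0 + t *\<^sub>R B)) \<bullet> (M *v (w0 + t *\<^sub>R B)) \<le> s^2 * ((w0 + t *\<^sub>R B) \<bullet> (w0 + t *\<^sub>R B))"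
      by (simp add: power2_norm_eq_inner power_mult_distrib)
    moreover have "(M *v w0) \<bullet> (M *v w0) = s^2" by (simp add: s_def power2_norm_eq_inner)
    moreover have "w0 \<bullet> w0 = 1" using w0n by (simp add: power2_norm_eq_inner[symmetric])
    moreover have "(M *v w0) \<bullet> (M *v B) = (M *v (M *v w0)) \<bullet> B" by (rule sym_dot[OF symM, symmetric])
    moreover have "(M *v (M *v w0)) \<bullet> B = B \<bullet> B + s^2 * (w0 \<bullet> B)"
      unfolding B_def by (simp add: inner_diff_left inner_diff_right algebra_simps inner_commute)
    ultimately show ?thesis
      by (simp add: matrix_vector_right_distrib matrix_vector_mult_scaleR inner_add_left inner_add_right
          algebra_simps power2_eq_square inner_commute)
  qed
  then have "B \<bullet> B = 0" by (intro quad_nonpos_zero) auto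
  then have B0: "M *v (M *v w0) = (s^2) *\<^sub>R w0" unfolding B_def by simp
  have sle: "s \<le> \<bar>lam2\<bar>"
  proof (cases "M *v w0 + s *\<^sub>R w0 = 0")
    case True
    then have "M *v w0 = (-s) *\<^sub>R w0" by (simp add: eq_neg_iff_add_eq_0)
    moreover have "w0 \<noteq> 0" using w0n by auto
    ultimately have "\<bar>-s\<bar> \<le> \<bar>lam2\<bar>" using lam2_max w0u by blast
    then show ?thesis by simp
  next
    case False
    have "M *v (M *v w0 + s *\<^sub>R w0) = s *\<^sub>R (M *v w0 + s *\<^sub>R w0)"
      using B0 by (simp add: matrix_vector_right_distrib matrix_vector_mult_scaleR algebra_simps power2_eq_square)
    moreover have "u \<bullet> (M *v w0 + s *\<^sub>R w0) = 0" using w0u by (simp add: uM inner_add_right)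
    ultimately have "\<bar>s\<bar> \<le> \<bar>lam2\<bar>" using lam2_max False by blast
    then show ?thesis by simp
  qed
  fix w assume "u \<bullet> w = 0"
  then have "norm (M *v w) \<le> s * norm w" by (rule bnd)
  also have "\<dots> \<le> \<bar>lam2\<bar> * norm w" using sle by (simp add: mult_right_mono)
  finally show "norm (M *v w) \<le> \<bar>lam2\<bar> * norm w" .
qed



lemma invK_bounds:
  fixes nu th K :: real
  assumes "0 < th" "th \<le> 1/40" "0 \<le> nu" "nu \<le> 1/20" "K = 1 - 51/100*nu^2 - th"
  shows "K \<ge> 9737/10000" "1/K \<le> 1 + 103/100*(51/100*nu^2 + th)" "1/K \<le> 103/100" "1/K^2 \<le> 10609/10000"
proof -
  have n2: "nu^2 \<le> 1/400" using assms power_mono[of nu "1/20" 2] by (simp add: power2_eq_square)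
  have n20: "0 \<le> nu^2" by simp
  show K: "K \<ge> 9737/10000" using assms n2 by simp
  define sv where "sv = 51/100*nu^2 + th"
  have s0: "0 \<le> sv" "sv \<le> 27/1000" using n2 n20 assms by (auto simp: sv_def)
  have Ks: "K = 1 - sv" using assms by (simp add: sv_def)
  have "K * (1 + 103/100* sv) \<ge> 1"
  proof -
    have "sv * sv \<le> sv * (27/1000)" using s0 by (intro mult_left_mono) auto
    then have "103 * (sv * sv) \<le> 3 * sv" using s0 by linarith
    then show ?thesis unfolding Ks by (simp add: algebra_simps)
  qed
  then show "1/K \<le> 1 + 103/100*(51/100*nu^2 + th)" using K unfolding sv_def[symmetric]
    by (simp add: divide_le_eq mult.commute)
  show iK: "1/K \<le> 103/100" using K by (simp add: divide_le_eq)
  have "1/K^2 = (1/K)*(1/K)" by (simp add: power2_eq_square)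
  also have "\<dots> \<le> (103/100)*(103/100)" using iK K by (intro mult_mono) auto
  finally show "1/K^2 \<le> 10609/10000" by simp
qed

lemma arith_perp:
  fixes l nu th d D K R :: real
  assumes l0: "0 \<le> l" and l1: "l \<le> 1" and t0: "0 < th" and t1: "th \<le> 1/40"
    and n0: "0 \<le> nu" and n1: "nu \<le> 1/20" and d0: "0 \<le> d" and D0: "0 \<le> D" and Dd: "D \<le> 106/100*d"
    and Kdef: "K = 1 - 51/100*nu^2 - th"
    and Rdef: "R = (4*nu*d + 2*th*D)/(2*K) + th*D"
  shows "(l*d + th*D)/K + R*(l*nu+th)/K^2 \<le> (l*(1+3*nu^2)+3*th)*d"
proof -
  note ib = invK_bounds[OF t0 t1 n0 n1 Kdef]
  have K0: "K > 0" using ib(1) by simp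
  have n2: "nu^2 \<le> 1/400" using n0 n1 power_mono[of nu "1/20" 2] by (simp add: power2_eq_square)
  have n20: "0 \<le> nu^2" by simp
  define sv where "sv = 51/100*nu^2 + th"
  have A: "(l*d + th*D)/K \<le> (l + 106/100*th)*d*(1 + 103/100* sv)"
  proof -
    have "(l*d + th*D)/K = (l*d + th*D)*(1/K)" by simp
    also have "\<dots> \<le> (l + 106/100*th)*d*(1 + 103/100* sv)"
    proof (rule mult_mono)
      show "l*d + th*D \<le> (l + 106/100*th)*d" using mult_left_mono[OF Dd, of th] t0 by (simp add: algebra_simps)
      show "1/K \<le> 1 + 103/100* sv" using ib(2) by (simp add: sv_def)
      show "0 \<le> (l + 106/100*th)*d" using l0 t0 d0 by simp
      show "0 \<le> 1/K" using K0 by simp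
    qed
    finally show ?thesis .
  qed
  have A2: "(l + 106/100*th)*(1 + 103/100 * sv) \<le> l + 5253/10000*(l*nu^2) + 2119/1000*th"
  proof -
    have e1: "l*th \<le> th" using l1 t0 by (simp add: mult_left_le_one_le mult.commute)
    have e2: "th*nu^2 \<le> th*(1/400)" using n2 t0 by (intro mult_left_mono) auto
    have e3: "th*th \<le> th*(1/40)" using t1 t0 by (intro mult_left_mono) auto
    have eq: "(l + 106/100*th)*(1 + 103/100 * sv) =
     l + 5253 / 10000 * (l * nu^2) + 103/100 * (l * th) + 106/100*th + 556818/1000000 * (th * nu^2) + 10918/10000 * (th*th)"
      unfolding sv_def by (simp add: field_simps)
    show ?thesis unfolding eq using e1 e2 e3 t0 by linarith
  qed
  have B: "R \<le> (206/100*nu + 216/100*th)*d"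
  proof -
    have "(4*nu*d + 2*th*D)/(2*K) = (4*nu*d + 2*th*D)/2*(1/K)" by simp
    also have "\<dots> \<le> (4*nu*d + 2*th*(106/100*d))/2 * (103/100)"
      using ib(3) mult_left_mono[OF Dd, of th] t0 n0 d0 D0 K0
      by (intro mult_mono) auto
    finally have X1: "(4*nu*d + 2*th*D)/(2*K) \<le> (4*nu*d + 2*th*(106/100*d))/2 * (103/100)" .
    have X2: "(4*nu*d + 2*th*(106/100*d))/2 * (103/100) = 206/100*(nu*d) + 10918/10000*(th*d)"
      by (simp add: field_simps)
    have "th*D \<le> th*(106/100*d)" using mult_left_mono[OF Dd, of th] t0 by simp
    then have TD: "th*D \<le> 106/100*(th*d)" by (simp add: algebra_simps)
    have Rf: "(206/100*nu + 216/100*th)*d = 206/100*(nu*d) + 216/100*(th*d)" by (simp add: algebra_simps)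
    have "th*d \<ge> 0" using t0 d0 by simp
    then show ?thesis unfolding Rdef Rf using X1 X2 TD by linarith
  qed
  have C: "R*(l*nu+th)/K^2 \<le> (206/100*nu + 216/100*th)*d*(l*nu+th)*(10609/10000)"
  proof -
    have "R*(l*nu+th)/K^2 = R*(l*nu+th)*(1/K^2)" by simp
    also have "\<dots> \<le> (206/100*nu + 216/100*th)*d*(l*nu+th)*(10609/10000)"
    proof (intro mult_mono)
      show "R \<le> (206/100*nu + 216/100*th)*d" by (rule B)
      show "1/K^2 \<le> 10609/10000" by (rule ib(4))
    qed (use l0 n0 t0 d0 in auto)
    finally show ?thesis .
  qed
  have C2: "(206/100*nu + 216/100*th)*(l*nu+th)*(10609/10000) \<le> 219/100*(l*nu^2) + 29/100*th"
  proof -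
    have e1: "nu*th \<le> th/20" using n1 t0 mult_right_mono[of nu "1/20" th] by simp
    have e2: "l*nu*th \<le> th/20"
    proof -
      have "l*nu \<le> 1*(1/20)" using l0 l1 n0 n1 by (intro mult_mono) auto
      then show ?thesis using t0 mult_right_mono[of "l*nu" "1/20" th] by simp
    qed
    have e3: "th*th \<le> th/40" using t1 t0 mult_left_mono[of th "1/40" th] by simp
    have e4: "0 \<le> l*nu^2" using l0 by simp
    have eq: "(206/100*nu + 216/100*th)*(l*nu+th)*(10609/10000) =
       2185454/1000000*(l*nu^2) + 2185454/1000000*(nu*th) + 2291544/1000000*(l*nu*th)
       + 2291544/1000000*(th*th)"
      by (simp add: field_simps power2_eq_square)
    show ?thesis unfolding eq using e1 e2 e3 e4 t0 by linarith
  qed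
  have "(l*d + th*D)/K + R*(l*nu+th)/K^2 \<le> (l + 106/100*th)*d*(1 + 103/100 * sv) + (206/100*nu + 216/100*th)*d*(l*nu+th)*(10609/10000)"
    by (rule add_mono[OF A C])
  also have "\<dots> = (l + 106/100*th)*(1 + 103/100 * sv)*d + (206/100*nu + 216/100*th)*(l*nu+th)*(10609/10000)*d"
    by (simp only: mult_ac)
  also have "\<dots> \<le> (l + 5253/10000*(l*nu^2) + 2119/1000*th)*d + (219/100*(l*nu^2) + 29/100*th)*d"
    using A2 C2 d0 by (intro add_mono mult_right_mono) auto
  also have "\<dots> = (l + 5253/10000*(l*nu^2) + 2119/1000*th + (219/100*(l*nu^2) + 29/100*th))*d"
    by (simp add: algebra_simps)
  also have "\<dots> \<le> (l*(1+3*nu^2)+3*th)*d"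
  proof (rule mult_right_mono[OF _ d0])
    have "0 \<le> l*nu^2" using l0 by simp
    moreover have "l*(1+3*nu^2) = l + 3*(l*nu^2)" by (simp add: algebra_simps)
    ultimately show "l + 5253/10000*(l*nu^2) + 2119/1000*th + (219/100*(l*nu^2) + 29/100*th) \<le> l*(1+3*nu^2)+3*th"
      using t0 by linarith
  qed
  finally show ?thesis .
qed

lemma arith_u:
  fixes nu th d D K R :: real
  assumes t0: "0 < th" and t1: "th \<le> 1/40"
    and n0: "0 \<le> nu" and n1: "nu \<le> 1/20" and d0: "0 \<le> d" and D0: "0 \<le> D" and Dd: "D \<le> 106/100*d"
    and Kdef: "K = 1 - 51/100*nu^2 - th"
    and Rdef: "R = (4*nu*d + 2*th*D)/(2*K) + th*D"
  shows "(101/100*nu*d + th*D)/K + R/K \<le> (4*nu+4*th)*d"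
proof -
  note ib = invK_bounds[OF t0 t1 n0 n1 Kdef]
  have K0: "K > 0" using ib(1) by simp
  have B: "R \<le> (206/100*nu + 216/100*th)*d"
  proof -
    have "(4*nu*d + 2*th*D)/(2*K) = (4*nu*d + 2*th*D)/2*(1/K)" by simp
    also have "\<dots> \<le> (4*nu*d + 2*th*(106/100*d))/2 * (103/100)"
      using ib(3) mult_left_mono[OF Dd, of th] t0 n0 d0 D0 K0
      by (intro mult_mono) auto
    finally have X1: "(4*nu*d + 2*th*D)/(2*K) \<le> (4*nu*d + 2*th*(106/100*d))/2 * (103/100)" .
    have X2: "(4*nu*d + 2*th*(106/100*d))/2 * (103/100) = 206/100*(nu*d) + 10918/10000*(th*d)"
      by (simp add: field_simps)
    have "th*D \<le> th*(106/100*d)" using mult_left_mono[OF Dd, of th] t0 by simp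
    then have TD: "th*D \<le> 106/100*(th*d)" by (simp add: algebra_simps)
    have Rf: "(206/100*nu + 216/100*th)*d = 206/100*(nu*d) + 216/100*(th*d)" by (simp add: algebra_simps)
    have "th*d \<ge> 0" using t0 d0 by simp
    then show ?thesis unfolding Rdef Rf using X1 X2 TD by linarith
  qed
  have "(101/100*nu*d + th*D)/K + R/K = (101/100*nu*d + th*D + R)*(1/K)" by (simp add: add_divide_distrib)
  also have "\<dots> \<le> (101/100*nu*d + th*(106/100*d) + (206/100*nu + 216/100*th)*d) * (103/100)"
  proof (rule mult_mono)
    show "101/100*nu*d + th*D + R \<le> 101/100*nu*d + th*(106/100*d) + (206/100*nu + 216/100*th)*d"
    proof -
      have "th*D \<le> th*(106/100*d)" using mult_left_mono[OF Dd, of th] t0 by simp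
      then show ?thesis by (rule add_mono[OF add_mono[OF order_refl] B])
    qed
    show "1/K \<le> 103/100" by (rule ib(3))
    show "0 \<le> 101/100*nu*d + th*(106/100*d) + (206/100*nu + 216/100*th)*d" using n0 t0 d0 by simp
    show "0 \<le> 1/K" using K0 by simp
  qed
  also have "\<dots> \<le> (4*nu+4*th)*d"
  proof -
    have e: "(101/100*nu*d + th*(106/100*d) + (206/100*nu + 216/100*th)*d) * (103/100) = 31621/10000*(nu*d) + 16583/5000*(th*d)"
      by (simp add: field_simps)
    have f: "(4*nu+4*th)*d = 4*(nu*d) + 4*(th*d)" by (simp add: algebra_simps)
    have "0 \<le> nu*d" "0 \<le> th*d" using n0 t0 d0 by auto
    then show ?thesis unfolding e f by linarith
  qed
  finally show ?thesis .
qed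



lemma uu: "norm u = 1 \<Longrightarrow> u \<bullet> u = 1"
  by (metis power2_norm_eq_inner one_power2)

lemma pp_perp: "norm u = 1 \<Longrightarrow> u \<bullet> proj_uperp u v = 0"
  unfolding proj_uperp_def by (simp add: inner_diff_right uu)

lemma decomp: "(u \<bullet> v) *\<^sub>R u + proj_uperp u v = v"
  unfolding proj_uperp_def by simp

lemma pp_pyth: 
  assumes u: "norm u = 1"
  shows "(norm v)^2 = (u \<bullet> v)^2 + (norm (proj_uperp u v))^2"
proof -
  let ?p = "proj_uperp u v"
  have "((u \<bullet> v) *\<^sub>R u + ?p) \<bullet> ((u \<bullet> v) *\<^sub>R u + ?p) = (u \<bullet> v)^2 + ?p \<bullet> ?p"
    using pp_perp[OF u, of v] uu[OF u]
    by (simp add: inner_add_left inner_add_right inner_commute power2_eq_square)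
  then show ?thesis by (simp add: decomp power2_norm_eq_inner)
qed

lemma pp_le: "norm u = 1 \<Longrightarrow> norm (proj_uperp u v) \<le> norm v"
proof -
  assume u: "norm u = 1"
  have "(norm (proj_uperp u v))^2 \<le> (norm v)^2" using pp_pyth[OF u, of v] by simp
  then show ?thesis by (rule power2_le_imp_le) simp
qed

lemma pp_add: "proj_uperp u (v + w) = proj_uperp u v + proj_uperp u w"
  unfolding proj_uperp_def by (simp add: inner_add_right scaleR_add_left algebra_simps)
lemma pp_diff: "proj_uperp u (v - w) = proj_uperp u v - proj_uperp u w"
  unfolding proj_uperp_def by (simp add: inner_diff_right scaleR_diff_left algebra_simps)
lemma pp_scale: "proj_uperp u (c *\<^sub>R v) = c *\<^sub>R proj_uperp u v"
  unfolding proj_uperp_def by (simp add: scaleR_diff_right)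
lemma pu_add: "proj_u u (v + w) = proj_u u v + proj_u u w"
  unfolding proj_u_def by (simp add: inner_add_right scaleR_add_left)
lemma pu_scale: "proj_u u (c *\<^sub>R v) = c *\<^sub>R proj_u u v"
  unfolding proj_u_def by simp
lemma pu_norm: "norm u = 1 \<Longrightarrow> norm (proj_u u v) = \<bar>u \<bullet> v\<bar>"
  unfolding proj_u_def by simp

lemma comb:
  fixes P :: "real^'n \<Rightarrow> real^'n"
  assumes Padd: "\<And>a b. P (a + b) = P a + P b" and Pscale: "\<And>c a. P (c *\<^sub>R a) = c *\<^sub>R P a"
    and N: "norm y > 0" "norm y' > 0"
  shows "norm (P ((1 / norm y) *\<^sub>R y - (1 / norm y') *\<^sub>R y'))
     \<le> norm (P (y - y')) / norm y + \<bar>norm y - norm y'\<bar> / (norm y * norm y') * norm (P y')"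
proof -
  define N where "N = norm y"
  define N' where "N' = norm y'"
  have Np: "N > 0" "N' > 0" using N by (auto simp: N_def N'_def)
  have c: "(N' - N)/(N*N') = 1/N - 1/N'" using Np by (simp add: field_simps)
  have v: "(1/N) *\<^sub>R y - (1/N') *\<^sub>R y' = (1/N) *\<^sub>R (y - y') + ((N' - N)/(N*N')) *\<^sub>R y'"
    unfolding c by (simp add: algebra_simps)
  have Pm: "P (a - b) = P a - P b" for a b
  proof -
    have "P (a - b) + P b = P a" using Padd[of "a - b" b] by simp
    then show ?thesis by (simp add: eq_diff_eq)
  qed
  have eq: "P ((1/N) *\<^sub>R y - (1/N') *\<^sub>R y') = (1/N) *\<^sub>R P (y - y') + ((N' - N)/(N*N')) *\<^sub>R P y'"
    unfolding v Padd Pscale ..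
  have "norm (P ((1/N) *\<^sub>R y - (1/N') *\<^sub>R y')) \<le> norm ((1/N) *\<^sub>R P (y - y')) + norm (((N' - N)/(N*N')) *\<^sub>R P y')"
    unfolding eq by (rule norm_triangle_ineq)
  also have "\<dots> = norm (P (y - y')) / N + \<bar>N - N'\<bar> / (N * N') * norm (P y')"
  proof -
    have "\<bar>(N' - N)/(N*N')\<bar> = \<bar>N - N'\<bar> / (N * N')" using Np by (simp add: abs_divide abs_minus_commute)
    moreover have "\<bar>1/N\<bar> = 1/N" using Np by simp
    ultimately show ?thesis by simp
  qed
  finally show ?thesis unfolding N_def N'_def .
qed



theorem lemma6p1:
  fixes M Q :: "real^'n^'n" and u x x' :: "real^'n"
    and lam lam2 l2 theta nu :: real
  assumes symM: "transpose M = M"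
    and u_eig: "M *v u = lam *\<^sub>R u" and u_unit: "norm u = 1"
    and lam_pos: "lam > 0"
    and lam2_eig: "\<exists>v. v \<noteq> 0 \<and> u \<bullet> v = 0 \<and> M *v v = lam2 *\<^sub>R v"
    and lam2_max: "\<And>mu v. v \<noteq> 0 \<Longrightarrow> u \<bullet> v = 0 \<Longrightarrow> M *v v = mu *\<^sub>R v \<Longrightarrow> \<bar>mu\<bar> \<le> \<bar>lam2\<bar>"
    and gap: "lam > \<bar>lam2\<bar>"
    and l2_def: "l2 = \<bar>lam2\<bar> / lam"
    and theta_pos: "0 < theta"
    and theta_le: "theta \<le> (1/40) * (1 - l2) powr (3/2)"
    and Q_close: "opnorm (Q - M) \<le> theta * opnorm M"
    and nu_le: "nu \<le> 1/20"
    and x_unit: "norm x = 1" and x'_unit: "norm x' = 1"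
    and x_pos: "u \<bullet> x \<ge> 0" and x'_pos: "u \<bullet> x' \<ge> 0"
    and x_near: "norm (proj_uperp u x) \<le> nu"
    and x'_near: "norm (proj_uperp u x') \<le> nu"
  shows "norm (proj_uperp u ((1 / norm (Q *v x)) *\<^sub>R (Q *v x) - (1 / norm (Q *v x')) *\<^sub>R (Q *v x')))
           \<le> (l2 * (1 + 3 * nu^2) + 3 * theta) * norm (proj_uperp u x - proj_uperp u x')
       \<and> norm (proj_u u ((1 / norm (Q *v x)) *\<^sub>R (Q *v x) - (1 / norm (Q *v x')) *\<^sub>R (Q *v x')))
           \<le> (4 * nu + 4 * theta) * norm (proj_uperp u x - proj_uperp u x')"
proof -
  have u1: "u \<bullet> u = 1" using u_unit by (rule uu)
  have uM: "u \<bullet> (M *v w) = lam * (u \<bullet> w)" for w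
    using sym_dot[OF symM, of u w] u_eig by simp
  have MP0: "norm (M *v w) \<le> \<bar>lam2\<bar> * norm w" if "u \<bullet> w = 0" for w
    using spectral_bound[OF symM u_eig lam2_eig lam2_max that] .
  define L where "L = \<bar>lam2\<bar>"
  have L0: "0 \<le> L" and Llam: "L \<le> lam" using gap by (auto simp: L_def)
  have Ll2: "L = l2 * lam" using l2_def lam_pos by (simp add: L_def)
  have MP: "norm (M *v w) \<le> L * norm w" if "u \<bullet> w = 0" for w
    using MP0[OF that] by (simp add: L_def)
  have l20: "0 \<le> l2" using l2_def lam_pos by simp
  have l21: "l2 \<le> 1" using l2_def lam_pos gap by simp
  have nu0: "0 \<le> nu" using x_near norm_ge_zero order_trans by blast
  have th1: "theta \<le> 1/40"
  proof -
    have "(1 - l2) powr (3/2) \<le> 1" using l20 l21 by (intro powr_le1) auto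
    then show ?thesis using theta_le by simp
  qed
  have PpM: "proj_uperp u (M *v w) = M *v (proj_uperp u w)" for w
    unfolding proj_uperp_def by (simp add: uM matrix_vector_mult_diff_distrib matrix_vector_mult_scaleR u_eig)
  have Mle: "norm (M *v w) \<le> lam * norm w" for w
  proof -
    have "(norm (M *v w))^2 = (u \<bullet> (M *v w))^2 + (norm (proj_uperp u (M *v w)))^2"
      by (rule pp_pyth[OF u_unit])
    also have "\<dots> = lam^2 * (u \<bullet> w)^2 + (norm (M *v proj_uperp u w))^2"
      by (simp add: uM PpM power_mult_distrib)
    also have "\<dots> \<le> lam^2 * (u \<bullet> w)^2 + (lam * norm (proj_uperp u w))^2"
    proof -
      have "norm (M *v proj_uperp u w) \<le> lam * norm (proj_uperp u w)"
        using MP[OF pp_perp[OF u_unit]] Llam mult_right_mono[OF Llam norm_ge_zero] order_trans by blast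
      then have "(norm (M *v proj_uperp u w))^2 \<le> (lam * norm (proj_uperp u w))^2"
        by (intro power_mono) auto
      then show ?thesis by simp
    qed
    also have "\<dots> = (lam * norm w)^2" using pp_pyth[OF u_unit, of w] by (simp add: power_mult_distrib algebra_simps)
    finally show ?thesis by (rule power2_le_imp_le) (use lam_pos in simp)
  qed
  have opM: "opnorm M \<le> lam" unfolding opnorm_def by (rule onorm_le) (rule Mle)
  define E where "E = Q - M"
  have QE: "Q *v w = M *v w + E *v w" for w unfolding E_def by (simp add: matrix_vector_mult_diff_rdistrib)
  have onE: "onorm ((*v) E) \<le> theta * lam"
  proof -
    have "onorm ((*v) E) \<le> theta * opnorm M" using Q_close unfolding opnorm_def E_def by simp
    also have "\<dots> \<le> theta * lam" using opM theta_pos by (intro mult_left_mono) auto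
    finally show ?thesis .
  qed
  have Eb: "norm (E *v w) \<le> theta * lam * norm w" for w
  proof -
    have "norm (E *v w) \<le> onorm ((*v) E) * norm w" by (rule onorm[OF matrix_vector_mul_bounded_linear])
    also have "\<dots> \<le> theta * lam * norm w" using onE by (intro mult_right_mono) auto
    finally show ?thesis .
  qed
  define K where "K = 1 - 51/100*nu^2 - theta"
  note ib = invK_bounds[OF theta_pos th1 nu0 nu_le K_def]
  have K0: "K > 0" using ib(1) by simp
  have n2: "nu^2 \<le> 1/400" using nu0 nu_le power_mono[of nu "1/20" 2] by (simp add: power2_eq_square)
  have perx: "1 - 51/100*nu^2 \<le> u \<bullet> X \<and> u \<bullet> X \<le> 1
      \<and> lam * K \<le> norm (Q *v X)
      \<and> norm (proj_uperp u (Q *v X)) \<le> lam * (l2 * nu + theta)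
      \<and> (norm (M *v X))^2 = lam^2 * (u \<bullet> X)^2 + (norm (M *v proj_uperp u X))^2
      \<and> norm (M *v proj_uperp u X) \<le> L * nu"
    if X1: "norm X = 1" and Xp: "u \<bullet> X \<ge> 0" and Xn: "norm (proj_uperp u X) \<le> nu" for X
  proof -
    define a where "a = u \<bullet> X"
    define p where "p = proj_uperp u X"
    have sq: "(norm p)^2 = 1 - a^2" using pp_pyth[OF u_unit, of X] X1 by (simp add: a_def p_def)
    have pn: "(norm p)^2 \<le> nu^2" using Xn by (intro power_mono) (auto simp: p_def)
    have a1: "a \<le> 1"
    proof -
      have "a^2 \<le> 1" using sq zero_le_power2[of "norm p"] by linarith
      then have "a^2 \<le> 1^2" by simp
      then show ?thesis by (rule power2_le_imp_le) simp
    qed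
    have a0: "1 - 51/100*nu^2 \<le> a"
    proof (rule ccontr)
      assume "\<not> ?thesis"
      then have lt: "a < 1 - 51/100*nu^2" by simp
      have c0: "0 \<le> a" using Xp by (simp add: a_def)
      have "a^2 < (1 - 51/100*nu^2)^2" using lt c0 by (intro power_strict_mono) auto
      moreover have "(1 - 51/100*nu^2)^2 = 1 - 102/100*nu^2 + 2601/10000*(nu^2*nu^2)"
        by (simp add: power2_eq_square algebra_simps)
      moreover have "nu^2*nu^2 \<le> nu^2 * (1/400)" using n2 by (intro mult_left_mono) auto
      moreover have "0 \<le> nu^2" by simp
      ultimately show False using sq pn by linarith
    qed
    have MX: "(norm (M *v X))^2 = lam^2 * a^2 + (norm (M *v p))^2"
      using pp_pyth[OF u_unit, of "M *v X"] by (simp add: uM PpM a_def p_def power_mult_distrib)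
    have Mp: "norm (M *v p) \<le> L * nu"
    proof -
      have "norm (M *v p) \<le> L * norm p" using MP pp_perp[OF u_unit] by (simp add: p_def)
      also have "\<dots> \<le> L * nu" using Xn L0 by (intro mult_left_mono) (auto simp: p_def)
      finally show ?thesis .
    qed
    have EX: "norm (E *v X) \<le> theta * lam" using Eb[of X] X1 by simp
    have NX: "lam * K \<le> norm (Q *v X)"
    proof -
      have "lam * a = \<bar>u \<bullet> (M *v X)\<bar>" using uM[of X] lam_pos a1 Xp by (simp add: a_def)
      also have "\<dots> \<le> norm u * norm (M *v X)" by (rule Cauchy_Schwarz_ineq2)
      finally have "lam * a \<le> norm (M *v X)" using u_unit by simp
      moreover have "norm (M *v X) - norm (E *v X) \<le> norm (Q *v X)"
        unfolding QE by (rule norm_diff_ineq)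
      moreover have "lam * (1 - 51/100*nu^2) \<le> lam * a" using a0 lam_pos by (intro mult_left_mono) auto
      moreover have "lam * K = lam * (1 - 51/100*nu^2) - theta * lam" by (simp add: K_def algebra_simps)
      ultimately show ?thesis using EX by linarith
    qed
    have PQ: "norm (proj_uperp u (Q *v X)) \<le> lam * (l2 * nu + theta)"
    proof -
      have "proj_uperp u (Q *v X) = M *v p + proj_uperp u (E *v X)" unfolding QE pp_add PpM p_def ..
      then have "norm (proj_uperp u (Q *v X)) \<le> norm (M *v p) + norm (proj_uperp u (E *v X))"
        by (simp add: norm_triangle_ineq)
      also have "\<dots> \<le> L * nu + theta * lam" using Mp EX pp_le[OF u_unit, of "E *v X"] by linarith
      also have "\<dots> = lam * (l2 * nu + theta)" by (simp add: Ll2 algebra_simps)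
      finally show ?thesis .
    qed
    show ?thesis using a0 a1 NX PQ MX Mp by (simp add: a_def p_def)
  qed
  define a where "a = u \<bullet> x"
  define a' where "a' = u \<bullet> x'"
  define z where "z = proj_uperp u x"
  define z' where "z' = proj_uperp u x'"
  define d where "d = norm (z - z')"
  define D where "D = norm (x - x')"
  define y where "y = Q *v x"
  define y' where "y' = Q *v x'"
  define N where "N = norm y"
  define N' where "N' = norm y'"
  note px = perx[OF x_unit x_pos x_near, folded a_def z_def y_def N_def]
  note px' = perx[OF x'_unit x'_pos x'_near, folded a'_def z'_def y'_def N'_def]
  have d0: "0 \<le> d" and D0: "0 \<le> D" by (auto simp: d_def D_def)
  have NK: "lam * K \<le> N" "lam * K \<le> N'" using px px' by auto
  have lK: "lam * K > 0" using lam_pos K0 by simp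
  have Np: "N > 0" "N' > 0" using NK lK by linarith+
  have sqz: "(norm z)^2 = 1 - a^2" using pp_pyth[OF u_unit, of x] x_unit by (simp add: a_def z_def)
  have sqz': "(norm z')^2 = 1 - a'^2" using pp_pyth[OF u_unit, of x'] x'_unit by (simp add: a'_def z'_def)
  have zn: "norm z \<le> nu" "norm z' \<le> nu" using x_near x'_near by (auto simp: z_def z'_def)
  have zz: "\<bar>(norm z)^2 - (norm z')^2\<bar> \<le> 2 * nu * d"
  proof -
    have "(norm z)^2 - (norm z')^2 = (z - z') \<bullet> (z + z')"
      by (simp add: power2_norm_eq_inner inner_diff_left inner_diff_right inner_add_left inner_add_right inner_commute)
    then have "\<bar>(norm z)^2 - (norm z')^2\<bar> \<le> norm (z - z') * norm (z + z')"
      by (simp add: Cauchy_Schwarz_ineq2)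
    also have "\<dots> \<le> d * (2 * nu)"
    proof -
      have "norm (z + z') \<le> 2 * nu" using norm_triangle_ineq[of z z'] zn by linarith
      then show ?thesis unfolding d_def by (intro mult_left_mono) auto
    qed
    finally show ?thesis by (simp add: algebra_simps)
  qed
  have aa2: "\<bar>a^2 - a'^2\<bar> \<le> 2 * nu * d" using zz sqz sqz' by (simp add: abs_minus_commute)
  have haa: "\<bar>a - a'\<bar> \<le> 101/100 * nu * d"
  proof -
    have s: "a + a' \<ge> 199/100" using px px' n2 by (simp add: a_def a'_def)
    have "\<bar>a - a'\<bar> * (a + a') = \<bar>a^2 - a'^2\<bar>"
    proof -
      have "a^2 - a'^2 = (a - a')*(a+a')" by (simp add: power2_eq_square algebra_simps)
      then show ?thesis using s by (simp add: abs_mult)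
    qed
    then have "\<bar>a - a'\<bar> * (199/100) \<le> 2 * nu * d"
      using aa2 mult_left_mono[OF s, of "\<bar>a - a'\<bar>"] by simp
    moreover have "0 \<le> nu * d" using nu0 d0 by simp
    ultimately show ?thesis by simp
  qed
  have xd: "x - x' = (a - a') *\<^sub>R u + (z - z')"
    using decomp[of u x] decomp[of u x'] unfolding a_def a'_def z_def z'_def
    by (metis (no_types, lifting) add_diff_add scaleR_diff_left)
  have DD: "D \<le> 106/100 * d"
  proof -
    have "D \<le> norm ((a - a') *\<^sub>R u) + d" unfolding D_def d_def xd by (rule norm_triangle_ineq)
    also have "norm ((a - a') *\<^sub>R u) = \<bar>a - a'\<bar>" using u_unit by simp
    finally have "D \<le> \<bar>a - a'\<bar> + d" by simp
    moreover have "101/100 * nu * d \<le> 101/100 * (1/20) * d" using nu_le d0 by (intro mult_right_mono) auto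
    ultimately show ?thesis using haa by linarith
  qed
  have uzz: "u \<bullet> (z - z') = 0" using pp_perp[OF u_unit] by (simp add: z_def z'_def inner_diff_right)
  have Mzz: "norm (M *v (z - z')) \<le> L * d" using MP[OF uzz] by (simp add: d_def)
  have Mxx: "norm (M *v (x - x')) \<le> lam * D" using Mle by (simp add: D_def)
  have Exx: "norm (E *v (x - x')) \<le> theta * lam * D" using Eb by (simp add: D_def)
  define R where "R = (4*nu*d + 2*theta*D)/(2*K) + theta*D"
  have NN: "\<bar>N - N'\<bar> \<le> lam * R"
  proof -
    define A where "A = M *v x"
    define A' where "A' = M *v x'"
    define B where "B = E *v x"
    define B' where "B' = E *v x'"
    have yAB: "y = A + B" "y' = A' + B'" by (simp_all add: y_def y'_def A_def A'_def B_def B'_def QE)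
    define S where "S = N + N'"
    have S0: "S \<ge> 2 * (lam * K)" using NK by (simp add: S_def)
    have "(N - N') * S = y \<bullet> y - y' \<bullet> y'"
      by (simp add: S_def N_def N'_def algebra_simps power2_eq_square[symmetric] power2_norm_eq_inner)
    also have "\<dots> = (A \<bullet> A - A' \<bullet> A') + (A - A') \<bullet> (B + B') + (B - B') \<bullet> (y + y')"
      unfolding yAB by (simp add: inner_add_left inner_add_right inner_diff_left inner_diff_right inner_commute algebra_simps)
    finally have id: "(N - N') * S = (A \<bullet> A - A' \<bullet> A') + (A - A') \<bullet> (B + B') + (B - B') \<bullet> (y + y')" .
    have t1: "\<bar>A \<bullet> A - A' \<bullet> A'\<bar> \<le> 4 * lam^2 * nu * d"
    proof -
      have AA: "A \<bullet> A = lam^2 * a^2 + (norm (M *v z))^2" "A' \<bullet> A' = lam^2 * a'^2 + (norm (M *v z'))^2"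
        using px px' by (simp_all add: A_def A'_def power2_norm_eq_inner)
      have Mz: "norm (M *v z) \<le> L * nu" "norm (M *v z') \<le> L * nu" using px px' by auto
      have "\<bar>(norm (M *v z))^2 - (norm (M *v z'))^2\<bar> = \<bar>norm (M *v z) - norm (M *v z')\<bar> * (norm (M *v z) + norm (M *v z'))"
      proof -
        have "(norm (M *v z))^2 - (norm (M *v z'))^2 = (norm (M *v z) - norm (M *v z')) * (norm (M *v z) + norm (M *v z'))"
          by (simp add: power2_eq_square algebra_simps)
        then show ?thesis by (simp add: abs_mult)
      qed
      also have "\<dots> \<le> (L * d) * (2 * (L * nu))"
      proof (rule mult_mono)
        have "\<bar>norm (M *v z) - norm (M *v z')\<bar> \<le> norm (M *v z - M *v z')" by (rule norm_triangle_ineq3)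
        then show "\<bar>norm (M *v z) - norm (M *v z')\<bar> \<le> L * d" using Mzz by (simp add: matrix_vector_mult_diff_distrib)
        show "norm (M *v z) + norm (M *v z') \<le> 2 * (L * nu)" using Mz by simp
      qed (use L0 d0 in auto)
      also have "\<dots> = 2 * (L * L) * (nu * d)" by (simp add: algebra_simps)
      also have "\<dots> \<le> 2 * (lam * lam) * (nu * d)"
        using L0 Llam nu0 d0 by (intro mult_right_mono mult_left_mono mult_mono) auto
      finally have m: "\<bar>(norm (M *v z))^2 - (norm (M *v z'))^2\<bar> \<le> 2 * (lam * lam) * (nu * d)" .
      have "\<bar>lam^2 * a^2 - lam^2 * a'^2\<bar> = \<bar>lam^2 * (a^2 - a'^2)\<bar>" by (simp only: right_diff_distrib)
      also have "\<dots> = lam^2 * \<bar>a^2 - a'^2\<bar>" by (simp add: abs_mult)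
      also have "\<dots> \<le> lam^2 * (2 * nu * d)" using aa2 by (intro mult_left_mono) auto
      finally have l: "\<bar>lam^2 * a^2 - lam^2 * a'^2\<bar> \<le> lam^2 * (2 * nu * d)" .
      have "\<bar>A \<bullet> A - A' \<bullet> A'\<bar> \<le> \<bar>lam^2 * a^2 - lam^2 * a'^2\<bar> + \<bar>(norm (M *v z))^2 - (norm (M *v z'))^2\<bar>"
        unfolding AA by linarith
      also have "\<dots> \<le> lam^2 * (2 * nu * d) + 2 * (lam * lam) * (nu * d)" using l m by linarith
      also have "\<dots> = 4 * lam^2 * nu * d" by (simp add: power2_eq_square algebra_simps)
      finally show ?thesis .
    qed
    have t2: "\<bar>(A - A') \<bullet> (B + B')\<bar> \<le> 2 * theta * lam^2 * D"
    proof -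
      have "\<bar>(A - A') \<bullet> (B + B')\<bar> \<le> norm (A - A') * norm (B + B')" by (rule Cauchy_Schwarz_ineq2)
      also have "\<dots> \<le> (lam * D) * (theta * lam * 2)"
      proof (rule mult_mono)
        show "norm (A - A') \<le> lam * D" using Mxx by (simp add: A_def A'_def matrix_vector_mult_diff_distrib)
        have "norm (B + B') \<le> norm B + norm B'" by (rule norm_triangle_ineq)
        moreover have "norm B \<le> theta * lam" "norm B' \<le> theta * lam"
          using Eb[of x] Eb[of x'] x_unit x'_unit by (simp_all add: B_def B'_def)
        ultimately show "norm (B + B') \<le> theta * lam * 2" by linarith
      qed (use lam_pos D0 in auto)
      also have "\<dots> = 2 * theta * lam^2 * D" by (simp add: power2_eq_square algebra_simps)
      finally show ?thesis .
    qed
    have t3: "\<bar>(B - B') \<bullet> (y + y')\<bar> \<le> theta * lam * D * S"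
    proof -
      have "\<bar>(B - B') \<bullet> (y + y')\<bar> \<le> norm (B - B') * norm (y + y')" by (rule Cauchy_Schwarz_ineq2)
      also have "\<dots> \<le> (theta * lam * D) * S"
      proof (rule mult_mono)
        show "norm (B - B') \<le> theta * lam * D" using Exx by (simp add: B_def B'_def matrix_vector_mult_diff_distrib)
        show "norm (y + y') \<le> S" unfolding S_def N_def N'_def by (rule norm_triangle_ineq)
      qed (use theta_pos lam_pos D0 in auto)
      finally show ?thesis .
    qed
    have Sp: "S > 0" using S0 lK by linarith
    have "\<bar>N - N'\<bar> * S \<le> (4 * lam^2 * nu * d + 2 * theta * lam^2 * D) + theta * lam * D * S"
    proof -
      have "\<bar>N - N'\<bar> * S = \<bar>(N - N') * S\<bar>" using Sp by (simp add: abs_mult)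
      also have "\<dots> \<le> \<bar>A \<bullet> A - A' \<bullet> A'\<bar> + \<bar>(A - A') \<bullet> (B + B')\<bar> + \<bar>(B - B') \<bullet> (y + y')\<bar>"
        unfolding id by linarith
      finally show ?thesis using t1 t2 t3 by linarith
    qed
    then have "\<bar>N - N'\<bar> \<le> (4 * lam^2 * nu * d + 2 * theta * lam^2 * D) / S + theta * lam * D"
      using Sp by (simp add: field_simps)
    also have "(4 * lam^2 * nu * d + 2 * theta * lam^2 * D) / S \<le> (4 * lam^2 * nu * d + 2 * theta * lam^2 * D) / (2 * (lam * K))"
      using S0 lK nu0 d0 D0 theta_pos lam_pos by (intro divide_left_mono) auto
    also have "(4 * lam^2 * nu * d + 2 * theta * lam^2 * D) / (2 * (lam * K)) + theta * lam * D = lam * R"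
      using lam_pos K0 by (simp add: R_def field_simps power2_eq_square)
    finally show ?thesis by simp
  qed
  have yy: "y - y' = M *v (x - x') + E *v (x - x')"
    by (simp add: y_def y'_def QE matrix_vector_mult_diff_distrib)
  show ?thesis
  proof
    have c: "norm (proj_uperp u ((1 / N) *\<^sub>R y - (1 / N') *\<^sub>R y'))
       \<le> norm (proj_uperp u (y - y')) / N + \<bar>N - N'\<bar> / (N * N') * norm (proj_uperp u y')"
      unfolding N_def N'_def by (rule comb[OF pp_add pp_scale]) (use Np in \<open>simp_all add: N_def N'_def\<close>)
    have p1: "norm (proj_uperp u (y - y')) \<le> lam * (l2 * d + theta * D)"
    proof -
      have "proj_uperp u (y - y') = M *v (z - z') + proj_uperp u (E *v (x - x'))"
        unfolding yy pp_add PpM pp_diff z_def z'_def ..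
      then have "norm (proj_uperp u (y - y')) \<le> norm (M *v (z - z')) + norm (proj_uperp u (E *v (x - x')))"
        by (simp add: norm_triangle_ineq)
      also have "\<dots> \<le> L * d + theta * lam * D" using Mzz Exx pp_le[OF u_unit, of "E *v (x - x')"] by linarith
      also have "\<dots> = lam * (l2 * d + theta * D)" by (simp add: Ll2 algebra_simps)
      finally show ?thesis .
    qed
    have p2: "norm (proj_uperp u y') \<le> lam * (l2 * nu + theta)" using px' by simp
    have R0: "0 \<le> R" unfolding R_def using K0 nu0 d0 D0 theta_pos
      by (intro add_nonneg_nonneg divide_nonneg_pos mult_nonneg_nonneg) auto
    have lnt: "0 \<le> l2 * nu + theta" using l20 nu0 theta_pos by simp
    have q1: "norm (proj_uperp u (y - y')) / N \<le> (lam * (l2 * d + theta * D)) / (lam * K)"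
      by (rule frac_le) (use p1 NK lK l20 d0 D0 theta_pos lam_pos in auto)
    have q2: "\<bar>N - N'\<bar> / (N * N') * norm (proj_uperp u y') \<le> (lam * R) * (lam * (l2 * nu + theta)) / ((lam * K) * (lam * K))"
    proof -
      have "\<bar>N - N'\<bar> / (N * N') * norm (proj_uperp u y') = (\<bar>N - N'\<bar> * norm (proj_uperp u y')) / (N * N')" by simp
      also have "\<dots> \<le> (lam * R) * (lam * (l2 * nu + theta)) / ((lam * K) * (lam * K))"
      proof (rule frac_le)
        show "\<bar>N - N'\<bar> * norm (proj_uperp u y') \<le> lam * R * (lam * (l2 * nu + theta))"
          by (rule mult_mono[OF NN p2]) (use lam_pos R0 in auto)
        show "0 \<le> lam * R * (lam * (l2 * nu + theta))"
          using lam_pos R0 lnt by simp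
        show "0 < lam * K * (lam * K)" using lK by simp
        show "lam * K * (lam * K) \<le> N * N'" using NK lK by (intro mult_mono) auto
      qed
      finally show ?thesis .
    qed
    have "norm (proj_uperp u ((1 / N) *\<^sub>R y - (1 / N') *\<^sub>R y')) \<le> (l2 * d + theta * D) / K + R * (l2 * nu + theta) / K^2"
    proof -
      have e1: "(lam * (l2 * d + theta * D)) / (lam * K) = (l2 * d + theta * D) / K" using lam_pos by simp
      have e2: "(lam * R) * (lam * (l2 * nu + theta)) / ((lam * K) * (lam * K)) = R * (l2 * nu + theta) / K^2"
        using lam_pos K0 by (simp add: field_simps power2_eq_square)
      show ?thesis using c q1 q2 unfolding e1 e2 by linarith
    qed
    also have "\<dots> \<le> (l2 * (1 + 3 * nu^2) + 3 * theta) * d"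
      by (rule arith_perp[OF l20 l21 theta_pos th1 nu0 nu_le d0 D0 DD K_def R_def])
    finally show "norm (proj_uperp u ((1 / norm (Q *v x)) *\<^sub>R (Q *v x) - (1 / norm (Q *v x')) *\<^sub>R (Q *v x')))
           \<le> (l2 * (1 + 3 * nu^2) + 3 * theta) * norm (proj_uperp u x - proj_uperp u x')"
      by (simp add: N_def N'_def y_def y'_def d_def z_def z'_def)
  next
    have c: "norm (proj_u u ((1 / N) *\<^sub>R y - (1 / N') *\<^sub>R y'))
       \<le> norm (proj_u u (y - y')) / N + \<bar>N - N'\<bar> / (N * N') * norm (proj_u u y')"
      unfolding N_def N'_def by (rule comb[OF pu_add pu_scale]) (use Np in \<open>simp_all add: N_def N'_def\<close>)
    have p1: "norm (proj_u u (y - y')) \<le> lam * (101/100 * nu * d + theta * D)"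
    proof -
      have "norm (proj_u u (y - y')) = \<bar>u \<bullet> (M *v (x - x')) + u \<bullet> (E *v (x - x'))\<bar>"
        unfolding pu_norm[OF u_unit] yy by (simp add: inner_add_right)
      also have "\<dots> \<le> \<bar>u \<bullet> (M *v (x - x'))\<bar> + \<bar>u \<bullet> (E *v (x - x'))\<bar>" by (rule abs_triangle_ineq)
      also have "\<bar>u \<bullet> (M *v (x - x'))\<bar> = lam * \<bar>a - a'\<bar>"
        using lam_pos by (simp add: uM a_def a'_def inner_diff_right abs_mult)
      also have "\<bar>u \<bullet> (E *v (x - x'))\<bar> \<le> theta * lam * D"
      proof -
        have "\<bar>u \<bullet> (E *v (x - x'))\<bar> \<le> norm u * norm (E *v (x - x'))" by (rule Cauchy_Schwarz_ineq2)
        then show ?thesis using Exx u_unit by simp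
      qed
      finally have "norm (proj_u u (y - y')) \<le> lam * \<bar>a - a'\<bar> + theta * lam * D" by simp
      moreover have "lam * \<bar>a - a'\<bar> \<le> lam * (101/100 * nu * d)" using haa lam_pos by (intro mult_left_mono) auto
      ultimately show ?thesis by (simp add: algebra_simps)
    qed
    have p2: "norm (proj_u u y') \<le> N'"
    proof -
      have "norm (proj_u u y') = \<bar>u \<bullet> y'\<bar>" by (rule pu_norm[OF u_unit])
      also have "\<dots> \<le> norm u * norm y'" by (rule Cauchy_Schwarz_ineq2)
      finally show ?thesis using u_unit by (simp add: N'_def)
    qed
    have q1: "norm (proj_u u (y - y')) / N \<le> (lam * (101/100 * nu * d + theta * D)) / (lam * K)"
      by (rule frac_le) (use p1 NK lK nu0 d0 D0 theta_pos lam_pos in auto)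
    have q2: "\<bar>N - N'\<bar> / (N * N') * norm (proj_u u y') \<le> (lam * R) / (lam * K)"
    proof -
      have "\<bar>N - N'\<bar> / (N * N') * norm (proj_u u y') \<le> \<bar>N - N'\<bar> / (N * N') * N'"
        using p2 by (intro mult_left_mono) (use Np in auto)
      also have "\<dots> = \<bar>N - N'\<bar> / N" using Np by simp
      also have "\<dots> \<le> (lam * R) / (lam * K)"
        by (rule frac_le) (use NN NK lK in auto)
      finally show ?thesis .
    qed
    have "norm (proj_u u ((1 / N) *\<^sub>R y - (1 / N') *\<^sub>R y')) \<le> (101/100 * nu * d + theta * D) / K + R / K"
    proof -
      have e1: "(lam * (101/100 * nu * d + theta * D)) / (lam * K) = (101/100 * nu * d + theta * D) / K" using lam_pos by simp
      have e2: "(lam * R) / (lam * K) = R / K" using lam_pos by simp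
      show ?thesis using c q1 q2 unfolding e1 e2 by linarith
    qed
    also have "\<dots> \<le> (4 * nu + 4 * theta) * d"
      by (rule arith_u[OF theta_pos th1 nu0 nu_le d0 D0 DD K_def R_def])
    finally show "norm (proj_u u ((1 / norm (Q *v x)) *\<^sub>R (Q *v x) - (1 / norm (Q *v x')) *\<^sub>R (Q *v x')))
           \<le> (4 * nu + 4 * theta) * norm (proj_uperp u x - proj_uperp u x')"
      by (simp add: N_def N'_def y_def y'_def d_def z_def z'_def)
  qed
qed

end
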